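(* If $M$ is a simple rank-$r$ matroid with no $2$-claw, then $|E(M)| \ge 2^r-1$. If equality holds then $M \cong \mathrm{PG}(r-1,2)$.
   Context: A claw of a matroid $M$ is a set that is both a flat and an independent set of $M$; a $k$-claw is a claw of size $k$. $\mathrm{PG}(r-1,2)$ is the rank-$r$ binary projective geometry. *)

theory Defs
  imports Main
begin

definition matroid :: "'a set \<Rightarrow> ('a set \<Rightarrow> bool) \<Rightarrow> bool" where
  "matroid E I \<longleftrightarrow> finite E \<and> I {} \<and> (\<forall>X. I X \<longrightarrow> X \<subseteq> E)
     \<and> (\<forall>X Y. I X \<and> Y \<subseteq> X \<longrightarrow> I Y)
     \<and> (\<forall>X Y. I X \<and> I Y \<and> card X < card Y \<longrightarrow> (\<exists>e\<in>Y - X. I (insert e X)))"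

definition mrk :: "('a set \<Rightarrow> bool) \<Rightarrow> 'a set \<Rightarrow> nat" where
  "mrk I X = Max {card Y | Y. Y \<subseteq> X \<and> I Y}"

definition matroid_rank :: "'a set \<Rightarrow> ('a set \<Rightarrow> bool) \<Rightarrow> nat" where
  "matroid_rank E I = mrk I E"

definition mclosure :: "'a set \<Rightarrow> ('a set \<Rightarrow> bool) \<Rightarrow> 'a set \<Rightarrow> 'a set" where
  "mclosure E I X = {e \<in> E. mrk I (insert e X) = mrk I X}"

definition flat :: "'a set \<Rightarrow> ('a set \<Rightarrow> bool) \<Rightarrow> 'a set \<Rightarrow> bool" where
  "flat E I X \<longleftrightarrow> X \<subseteq> E \<and> mclosure E I X = X"

definition claw :: "'a set \<Rightarrow> ('a set \<Rightarrow> bool) \<Rightarrow> 'a set \<Rightarrow> bool" where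
  "claw E I X \<longleftrightarrow> flat E I X \<and> I X"

definition simple_matroid :: "'a set \<Rightarrow> ('a set \<Rightarrow> bool) \<Rightarrow> bool" where
  "simple_matroid E I \<longleftrightarrow> (\<forall>X \<subseteq> E. card X \<le> 2 \<longrightarrow> I X)"

definition matroid_iso :: "'a set \<Rightarrow> ('a set \<Rightarrow> bool) \<Rightarrow> 'b set \<Rightarrow> ('b set \<Rightarrow> bool) \<Rightarrow> bool" where
  "matroid_iso E1 I1 E2 I2 \<longleftrightarrow>
     (\<exists>f. bij_betw f E1 E2 \<and> (\<forall>X \<subseteq> E1. I1 X \<longleftrightarrow> I2 (f ` X)))"

text \<open>Vectors of GF(2)^r are encoded as subsets of {..<r} (their supports);
  vector addition is symmetric difference. The sum of a finite family F of vectors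
  has as support the coordinates lying in an odd number of members of F.\<close>
definition gf2_sum :: "nat set set \<Rightarrow> nat set" where
  "gf2_sum F = {i. odd (card {v \<in> F. i \<in> v})}"

text \<open>Linear independence over GF(2): no nonempty subfamily sums to zero
  (coefficients in GF(2) are 0 or 1).\<close>
definition gf2_indep :: "nat set set \<Rightarrow> bool" where
  "gf2_indep S \<longleftrightarrow> (\<forall>F \<subseteq> S. F \<noteq> {} \<longrightarrow> gf2_sum F \<noteq> {})"

definition PG_ground :: "nat \<Rightarrow> nat set set" where
  "PG_ground r = {v. v \<subseteq> {..<r} \<and> v \<noteq> {}}"

definition PG_indep :: "nat \<Rightarrow> nat set set \<Rightarrow> bool" where
  "PG_indep r S \<longleftrightarrow> S \<subseteq> PG_ground r \<and> gf2_indep S"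

end

theory Submission
  imports Defs
begin



locale mat =
  fixes E :: "'a set" and I :: "'a set \<Rightarrow> bool"
  assumes mat: "matroid E I"
begin

abbreviation cl where "cl \<equiv> mclosure E I"
abbreviation rk where "rk \<equiv> mrk I"

lemma finE: "finite E" using mat unfolding matroid_def by blast
lemma indep_sub: "I X \<Longrightarrow> X \<subseteq> E" using mat unfolding matroid_def by blast
lemma indep_fin: "I X \<Longrightarrow> finite X" using indep_sub finE finite_subset by blast
lemma indep_mono: "I X \<Longrightarrow> Y \<subseteq> X \<Longrightarrow> I Y" using mat unfolding matroid_def by blast
lemma indep_empty: "I {}" using mat unfolding matroid_def by blast
lemma aug: "I X \<Longrightarrow> I Y \<Longrightarrow> card X < card Y \<Longrightarrow> \<exists>e\<in>Y - X. I (insert e X)"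
  using mat unfolding matroid_def by blast

lemma rkset_fin: "finite {card Y | Y. Y \<subseteq> X \<and> I Y}"
proof -
  have "{card Y | Y. Y \<subseteq> X \<and> I Y} \<subseteq> card ` Pow E" using indep_sub by blast
  thus ?thesis using finE finite_subset by blast
qed

lemma mrk_ge: "I Y \<Longrightarrow> Y \<subseteq> X \<Longrightarrow> card Y \<le> rk X"
  unfolding mrk_def using rkset_fin by (intro Max_ge) auto

lemma mrk_obtain: "\<exists>Y. Y \<subseteq> X \<and> I Y \<and> card Y = rk X"
proof -
  have "rk X \<in> {card Y | Y. Y \<subseteq> X \<and> I Y}"
    unfolding mrk_def using rkset_fin indep_empty by (intro Max_in) auto
  thus ?thesis by auto
qed

definition basis where "basis X B \<longleftrightarrow> B \<subseteq> X \<and> I B \<and> (\<forall>e\<in>X - B. \<not> I (insert e B))"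

lemma basis_card: assumes "basis X B" shows "card B = rk X"
proof -
  obtain Y where Y: "Y \<subseteq> X" "I Y" "card Y = rk X" using mrk_obtain by blast
  have "card B \<le> rk X" using assms mrk_ge unfolding basis_def by blast
  moreover have "\<not> card B < card Y"
  proof
    assume "card B < card Y"
    then obtain e where "e \<in> Y - B" "I (insert e B)" using aug Y assms unfolding basis_def by blast
    thus False using assms Y unfolding basis_def by blast
  qed
  ultimately show ?thesis using Y by simp
qed

lemma basis_ex: assumes "I Y" "Y \<subseteq> X" shows "\<exists>B. Y \<subseteq> B \<and> basis X B"
proof -
  define S where "S = {Z. Y \<subseteq> Z \<and> Z \<subseteq> X \<and> I Z}"
  have fS: "finite S" using indep_sub finE unfolding S_def
    by (metis (no_types, lifting) Collect_mono Pow_def finite_Pow_iff finite_subset)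
  have "Y \<in> S" using assms unfolding S_def by blast
  define m where "m = Max (card ` S)"
  have "m \<in> card ` S" unfolding m_def using fS \<open>Y \<in> S\<close> by (intro Max_in) auto
  then obtain Z where Z: "Z \<in> S" "card Z = m" by blast
  have "basis X Z" unfolding basis_def
  proof (intro conjI ballI notI)
    show "Z \<subseteq> X" "I Z" using Z unfolding S_def by auto
    fix e assume e: "e \<in> X - Z" "I (insert e Z)"
    hence "insert e Z \<in> S" using Z unfolding S_def by auto
    hence "card (insert e Z) \<le> m" unfolding m_def using fS by (intro Max_ge) auto
    moreover have "card (insert e Z) = Suc m" using Z e indep_fin \<open>I Z\<close> by simp
    ultimately show False by simp
  qed
  thus ?thesis using Z unfolding S_def by blast
qed

lemma basis_ex': "\<exists>B. basis X B" using basis_ex[OF indep_empty] by blast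

lemma indep_rk: "I X \<Longrightarrow> rk X = card X"
  using basis_card[of X X] unfolding basis_def by auto

lemma cl_char: assumes "X \<subseteq> E" "basis X B"
  shows "cl X = {e\<in>E. e \<in> B \<or> \<not> I (insert e B)}"
proof (intro set_eqI iffI)
  fix e assume e: "e \<in> cl X"
  hence eE: "e \<in> E" and eq: "rk (insert e X) = rk X" unfolding mclosure_def by auto
  show "e \<in> {e\<in>E. e \<in> B \<or> \<not> I (insert e B)}"
  proof (cases "e \<in> X")
    case True thus ?thesis using assms eE unfolding basis_def by auto
  next
    case False
    hence "e \<notin> B" using assms unfolding basis_def by auto
    { assume "I (insert e B)"
      hence "card (insert e B) \<le> rk (insert e X)" using assms unfolding basis_def
        by (intro mrk_ge) auto
      moreover have "card (insert e B) = Suc (card B)" using \<open>e \<notin> B\<close> assms indep_fin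
        unfolding basis_def by auto
      ultimately have False using eq basis_card[OF assms(2)] by simp }
    thus ?thesis using eE by blast
  qed
next
  fix e assume e: "e \<in> {e\<in>E. e \<in> B \<or> \<not> I (insert e B)}"
  show "e \<in> cl X"
  proof (cases "e \<in> X")
    case True thus ?thesis using e unfolding mclosure_def by (simp add: insert_absorb)
  next
    case False
    hence "e \<notin> B" using assms unfolding basis_def by auto
    hence "\<not> I (insert e B)" using e by auto
    hence "basis (insert e X) B" using assms unfolding basis_def by auto
    hence "rk (insert e X) = rk X" using basis_card assms by metis
    thus ?thesis using e unfolding mclosure_def by auto
  qed
qed

lemma cl_sub: "cl X \<subseteq> E" unfolding mclosure_def by auto
lemma cl_ext: "X \<subseteq> E \<Longrightarrow> X \<subseteq> cl X" unfolding mclosure_def by (auto simp: insert_absorb)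

lemma basis_cl: assumes "X \<subseteq> E" "basis X B" shows "basis (cl X) B"
  using assms cl_ext[OF assms(1)] cl_char[OF assms] unfolding basis_def by auto

lemma cl_idem: assumes "X \<subseteq> E" shows "cl (cl X) = cl X"
proof -
  obtain B where B: "basis X B" using basis_ex' by blast
  show ?thesis using cl_char[OF assms B] cl_char[OF cl_sub basis_cl[OF assms B]] by simp
qed

lemma rk_cl: assumes "X \<subseteq> E" shows "rk (cl X) = rk X"
proof -
  obtain B where B: "basis X B" using basis_ex' by blast
  show ?thesis using basis_card[OF B] basis_card[OF basis_cl[OF assms B]] by simp
qed

lemma cl_mono: assumes "X \<subseteq> Y" "Y \<subseteq> E" shows "cl X \<subseteq> cl Y"
proof -
  obtain B where B: "basis X B" using basis_ex' by blast
  then obtain B' where B': "B \<subseteq> B'" "basis Y B'" using basis_ex[of B Y] assms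
    unfolding basis_def by blast
  have "X \<subseteq> E" using assms by auto
  show ?thesis unfolding cl_char[OF \<open>X \<subseteq> E\<close> B] cl_char[OF assms(2) B'(2)]
    using B' indep_mono[of "insert _ B'" "insert _ B"] by blast
qed

lemma cl_eq: assumes "X \<subseteq> E" "Y \<subseteq> cl X" "rk X \<le> rk Y" shows "cl Y = cl X"
proof -
  have YE: "Y \<subseteq> E" using assms cl_sub by blast
  obtain B where B: "basis Y B" using basis_ex' by blast
  have "basis (cl X) B" unfolding basis_def
  proof (intro conjI ballI notI)
    show "B \<subseteq> cl X" "I B" using B assms unfolding basis_def by auto
    fix e assume e: "e \<in> cl X - B" "I (insert e B)"
    hence "card (insert e B) \<le> rk (cl X)" using \<open>B \<subseteq> cl X\<close> by (intro mrk_ge) auto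
    moreover have "card (insert e B) = Suc (card B)" using e \<open>I B\<close> indep_fin by simp
    ultimately show False using basis_card[OF B] rk_cl[OF assms(1)] assms(3) by simp
  qed
  thus ?thesis using cl_char[OF YE B] cl_char[OF cl_sub \<open>basis (cl X) B\<close>] cl_idem[OF assms(1)]
    by simp
qed

lemma indep_insert_notcl: assumes "I Y" "e \<in> E" "e \<notin> cl Y" shows "I (insert e Y)"
proof -
  have "basis Y Y" using assms unfolding basis_def by auto
  thus ?thesis using cl_char[OF indep_sub[OF assms(1)]] assms by auto
qed

lemma notcl_of_indep: assumes "I (insert x Y)" "x \<notin> Y" shows "x \<notin> cl Y"
proof -
  have "I Y" using assms indep_mono by blast
  hence "basis Y Y" unfolding basis_def by auto
  thus ?thesis using cl_char[OF indep_sub[OF \<open>I Y\<close>]] assms by auto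
qed

definition flat' where "flat' F \<longleftrightarrow> F \<subseteq> E \<and> cl F = F"

lemma flat_cl: "X \<subseteq> E \<Longrightarrow> flat' (cl X)" unfolding flat'_def using cl_idem cl_sub by auto

lemma flat_sub: "flat' F \<Longrightarrow> X \<subseteq> F \<Longrightarrow> cl X \<subseteq> F"
  unfolding flat'_def using cl_mono by blast

lemma cl_insert_cl: assumes "X \<subseteq> E" "e \<in> E" shows "cl (insert e (cl X)) = cl (insert e X)"
proof
  show "cl (insert e X) \<subseteq> cl (insert e (cl X))"
    using cl_ext[OF assms(1)] cl_sub assms by (intro cl_mono) auto
  have "insert e (cl X) \<subseteq> cl (insert e X)"
    using cl_mono[of X "insert e X"] cl_ext[of "insert e X"] assms by auto
  thus "cl (insert e (cl X)) \<subseteq> cl (insert e X)"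
    using flat_sub flat_cl assms by simp
qed

lemma indep_iff_cl: assumes "X \<subseteq> E" shows "I X \<longleftrightarrow> (\<forall>x\<in>X. x \<notin> cl (X - {x}))"
proof
  assume "I X" thus "\<forall>x\<in>X. x \<notin> cl (X - {x})"
    using notcl_of_indep[of _ "X - {_}"] by (metis Diff_iff insert_Diff singletonI)
next
  assume H: "\<forall>x\<in>X. x \<notin> cl (X - {x})"
  show "I X"
  proof (rule ccontr)
    assume "\<not> I X"
    obtain B where B: "basis X B" using basis_ex' by blast
    have "B \<noteq> X" using B \<open>\<not> I X\<close> unfolding basis_def by auto
    then obtain x where x: "x \<in> X" "x \<notin> B" using B unfolding basis_def by blast
    hence "\<not> I (insert x B)" using B unfolding basis_def by auto
    hence "x \<in> cl B" using cl_char[of B B] B x assms unfolding basis_def by auto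
    moreover have "cl B \<subseteq> cl (X - {x})" using B x assms unfolding basis_def
      by (intro cl_mono) auto
    ultimately show False using H x by auto
  qed
qed

end



context mat begin
lemma rk_mono: "X \<subseteq> Y \<Longrightarrow> rk X \<le> rk Y"
  using basis_ex'[of X] basis_card mrk_ge unfolding basis_def by (metis subset_trans)
lemma flat_E: "flat' E" unfolding flat'_def using cl_sub cl_ext by blast
end

locale smat = mat +
  assumes simpl: "simple_matroid E I"
    and noclaw: "\<not> (\<exists>X. claw E I X \<and> card X = 2)"
begin

lemma indep2: "x \<in> E \<Longrightarrow> y \<in> E \<Longrightarrow> I {x, y}"
  using simpl unfolding simple_matroid_def by (simp add: card_insert_le_m1)

lemma indep1: "x \<in> E \<Longrightarrow> I {x}"
  using indep2[of x x] by simp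

lemma rk2: "x \<in> E \<Longrightarrow> y \<in> E \<Longrightarrow> x \<noteq> y \<Longrightarrow> rk {x, y} = 2"
  using indep_rk[OF indep2] by simp

lemma cl_empty: "cl {} = {}"
proof -
  { fix e assume "e \<in> cl {}"
    hence "e \<in> E" "rk {e} = rk {}" unfolding mclosure_def by auto
    moreover have "rk {} = 0" using indep_rk[OF indep_empty] by simp
    ultimately have False using indep_rk[OF indep1] by simp }
  thus ?thesis by blast
qed

lemma line3: assumes "x \<in> E" "y \<in> E" "x \<noteq> y" shows "\<exists>z\<in>cl {x, y}. z \<noteq> x \<and> z \<noteq> y"
proof (rule ccontr)
  assume "\<not> ?thesis"
  hence "cl {x, y} = {x, y}" using cl_ext[of "{x,y}"] assms by auto
  hence "claw E I {x, y}" unfolding claw_def flat_def using assms indep2 by auto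
  thus False using noclaw assms by auto
qed

definition t where "t x y = (SOME z. z \<in> cl {x, y} \<and> z \<noteq> x \<and> z \<noteq> y)"

lemma t_prop: assumes "x \<in> E" "y \<in> E" "x \<noteq> y"
  shows "t x y \<in> cl {x, y}" "t x y \<noteq> x" "t x y \<noteq> y" "t x y \<in> E"
proof -
  have "\<exists>z. z \<in> cl {x, y} \<and> z \<noteq> x \<and> z \<noteq> y" using line3[OF assms] by blast
  hence "t x y \<in> cl {x, y} \<and> t x y \<noteq> x \<and> t x y \<noteq> y"
    unfolding t_def by (rule someI_ex)
  thus "t x y \<in> cl {x, y}" "t x y \<noteq> x" "t x y \<noteq> y" "t x y \<in> E" using cl_sub by auto
qed

lemma t_comm: "t x y = t y x" unfolding t_def by (simp add: insert_commute conj_commute)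

lemma LL: assumes "a \<in> E" "b \<in> E" "a \<noteq> b" "c \<in> cl {a, b}" "d \<in> cl {a, b}" "c \<noteq> d"
  shows "cl {c, d} = cl {a, b}"
proof (rule cl_eq)
  show "{a, b} \<subseteq> E" using assms by auto
  show "{c, d} \<subseteq> cl {a, b}" using assms by auto
  have "c \<in> E" "d \<in> E" using assms cl_sub by auto
  thus "rk {a, b} \<le> rk {c, d}" using rk2 assms by simp
qed

lemma step:
  assumes F: "flat' F" and e: "e \<in> E" "e \<notin> F"
  shows "\<forall>x\<in>F. t e x \<in> cl (insert e F) \<and> t e x \<notin> F \<and> t e x \<noteq> e" "inj_on (t e) F"
proof -
  have FE: "F \<subseteq> E" and clF: "cl F = F" using F unfolding flat'_def by auto
  have ne: "x \<in> F \<Longrightarrow> e \<noteq> x" for x using e by auto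
  show "\<forall>x\<in>F. t e x \<in> cl (insert e F) \<and> t e x \<notin> F \<and> t e x \<noteq> e"
  proof
    fix x assume x: "x \<in> F"
    have xE: "x \<in> E" using x FE by auto
    have "cl {e, x} \<subseteq> cl (insert e F)" using x FE e by (intro cl_mono) auto
    moreover have tp: "t e x \<in> cl {e, x}" "t e x \<noteq> e" "t e x \<noteq> x"
      using t_prop[OF e(1) xE ne[OF x]] by auto
    moreover have "t e x \<notin> F"
    proof
      assume "t e x \<in> F"
      have "cl {x, t e x} = cl {e, x}"
        using LL[OF e(1) xE ne[OF x], of x "t e x"] tp cl_ext[of "{e,x}"] xE e by auto
      moreover have "cl {x, t e x} \<subseteq> F" using flat_sub[OF F] x \<open>t e x \<in> F\<close> by auto
      ultimately show False using cl_ext[of "{e,x}"] e xE by auto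
    qed
    ultimately show "t e x \<in> cl (insert e F) \<and> t e x \<notin> F \<and> t e x \<noteq> e" by auto
  qed
  show "inj_on (t e) F"
  proof
    fix x x' assume x: "x \<in> F" "x' \<in> F" "t e x = t e x'"
    show "x = x'"
    proof (rule ccontr)
      assume xx: "x \<noteq> x'"
      have xE: "x \<in> E" "x' \<in> E" using x FE by auto
      let ?y = "t e x"
      have tp: "?y \<in> cl {e, x}" "?y \<noteq> e" "?y \<in> cl {e, x'}"
        using t_prop[OF e(1) xE(1) ne[OF x(1)]] t_prop[OF e(1) xE(2) ne[OF x(2)]] x(3) by auto
      have c1: "cl {e, ?y} = cl {e, x}"
        using LL[OF e(1) xE(1) ne[OF x(1)], of e ?y] tp cl_ext[of "{e,x}"] xE e by auto
      have c2: "cl {e, ?y} = cl {e, x'}"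
        using LL[OF e(1) xE(2) ne[OF x(2)], of e ?y] tp cl_ext[of "{e,x'}"] xE e by auto
      have "x' \<in> cl {e, x}" using c1 c2 cl_ext[of "{e,x'}"] xE e by auto
      hence "cl {x, x'} = cl {e, x}"
        using LL[OF e(1) xE(1) ne[OF x(1)], of x x'] xx cl_ext[of "{e,x}"] xE e by auto
      moreover have "cl {x, x'} \<subseteq> F" using flat_sub[OF F] x by auto
      ultimately show False using cl_ext[of "{e,x}"] e xE by auto
    qed
  qed
qed

lemma rk_step: assumes F: "flat' F" and e: "e \<in> E" "e \<notin> F"
  shows "rk (cl (insert e F)) = Suc (rk F)"
proof -
  have FE: "F \<subseteq> E" and clF: "cl F = F" using F unfolding flat'_def by auto
  obtain B where B: "basis F B" using basis_ex' by blast
  have "e \<notin> cl B"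
  proof
    assume "e \<in> cl B"
    moreover have "cl B \<subseteq> F" using flat_sub[OF F] B unfolding basis_def by auto
    ultimately show False using e by auto
  qed
  hence Ie: "I (insert e B)" using indep_insert_notcl B e unfolding basis_def by auto
  have "basis (insert e F) (insert e B)" unfolding basis_def
  proof (intro conjI ballI notI)
    show "insert e B \<subseteq> insert e F" "I (insert e B)" using B Ie unfolding basis_def by auto
    fix f assume "f \<in> insert e F - insert e B" "I (insert f (insert e B))"
    thus False using B indep_mono[of "insert f (insert e B)" "insert f B"] unfolding basis_def by auto
  qed
  hence "rk (insert e F) = Suc (card B)" using basis_card B e indep_fin unfolding basis_def
    by (metis card_insert_disjoint subsetD)
  thus ?thesis using rk_cl[of "insert e F"] FE e basis_card[OF B] by simp
qed

lemma card_step: assumes F: "flat' F" and e: "e \<in> E" "e \<notin> F"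
  shows "2 * card F + 1 \<le> card (cl (insert e F))"
    and "F \<union> insert e (t e ` F) \<subseteq> cl (insert e F)"
proof -
  have FE: "F \<subseteq> E" using F unfolding flat'_def by auto
  note st = step[OF assms]
  show sub: "F \<union> insert e (t e ` F) \<subseteq> cl (insert e F)"
    using st cl_ext[of "insert e F"] FE e by auto
  have fF: "finite F" using FE finE finite_subset by blast
  have "card (F \<union> insert e (t e ` F)) = card F + card (insert e (t e ` F))"
    using st fF e by (intro card_Un_disjoint) auto
  also have "\<dots> = card F + Suc (card F)"
  proof -
    have "e \<notin> t e ` F" using st by auto
    hence "card (insert e (t e ` F)) = Suc (card (t e ` F))" using fF by simp
    thus ?thesis using card_image[OF st(2)] by simp
  qed
  finally have "card (F \<union> insert e (t e ` F)) = 2 * card F + 1" by simp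
  moreover have "card (F \<union> insert e (t e ` F)) \<le> card (cl (insert e F))"
    using sub finite_subset[OF cl_sub finE] by (intro card_mono) auto
  ultimately show "2 * card F + 1 \<le> card (cl (insert e F))" by simp
qed

lemma hyper: assumes F: "flat' F" "rk F = Suc k"
  shows "\<exists>H e. flat' H \<and> H \<subseteq> F \<and> rk H = k \<and> e \<in> F \<and> e \<notin> H"
proof -
  have FE: "F \<subseteq> E" using F unfolding flat'_def by auto
  obtain B where B: "basis F B" using basis_ex' by blast
  have "card B = Suc k" using basis_card[OF B] F by simp
  hence "B \<noteq> {}" by auto
  then obtain b where b: "b \<in> B" by blast
  let ?H = "cl (B - {b})"
  have IB: "I B" "B \<subseteq> F" using B unfolding basis_def by auto
  have "flat' ?H" using flat_cl[of "B - {b}"] IB FE by blast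
  moreover have "?H \<subseteq> F" using flat_sub[OF F(1), of "B - {b}"] IB by blast
  moreover have "rk ?H = k" using rk_cl[of "B - {b}"] indep_rk[of "B - {b}"] IB indep_mono FE b
      \<open>card B = Suc k\<close> indep_fin by auto
  moreover have "b \<notin> ?H" using notcl_of_indep[of b "B - {b}"] IB b by (simp add: insert_absorb)
  ultimately show ?thesis using b IB by blast
qed

lemma lower: "flat' F \<Longrightarrow> 2 ^ rk F \<le> card F + 1"
proof (induction "rk F" arbitrary: F)
  case 0 thus ?case by simp
next
  case (Suc k)
  obtain H e where H: "flat' H" "H \<subseteq> F" "rk H = k" "e \<in> F" "e \<notin> H"
    using hyper[OF Suc(3) Suc(2)[symmetric]] by blast
  have FE: "F \<subseteq> E" using Suc(3) unfolding flat'_def by auto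
  have "2 * card H + 1 \<le> card (cl (insert e H))" using card_step[OF H(1)] H FE by auto
  moreover have "cl (insert e H) \<subseteq> F" using flat_sub[OF Suc(3)] H by auto
  hence "card (cl (insert e H)) \<le> card F" using FE finE finite_subset by (intro card_mono) auto
  moreover have "2 ^ k \<le> card H + 1" using Suc(1)[of H] H by simp
  ultimately show ?case using Suc(2)[symmetric] by simp
qed

lemma upper: "flat' F \<Longrightarrow> flat' G \<Longrightarrow> F \<subseteq> G \<Longrightarrow> d = rk G - rk F \<Longrightarrow>
  (card F + 1) * 2 ^ d \<le> card G + 1"
proof (induction d arbitrary: F)
  case 0
  have "card F \<le> card G" using 0 finE finite_subset unfolding flat'_def by (intro card_mono) auto
  thus ?case by simp
next
  case (Suc d)
  have GE: "G \<subseteq> E" using Suc unfolding flat'_def by auto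
  have "F \<noteq> G" using Suc by auto
  then obtain e where e: "e \<in> G" "e \<notin> F" using Suc by blast
  let ?F = "cl (insert e F)"
  have FE: "F \<subseteq> E" using Suc(2) unfolding flat'_def by blast
  have "flat' ?F" using flat_cl[of "insert e F"] FE e GE by blast
  moreover have "?F \<subseteq> G" using flat_sub[OF Suc(3)] Suc e by auto
  moreover have "rk ?F = Suc (rk F)" using rk_step[OF Suc(2)] e GE by auto
  ultimately have A: "(card ?F + 1) * 2 ^ d \<le> card G + 1" using Suc by (intro Suc(1)) auto
  have "2 * card F + 1 \<le> card ?F" using card_step[OF Suc(2)] e GE by auto
  hence "(2 * card F + 2) * 2 ^ d \<le> (card ?F + 1) * 2 ^ d"
    by (intro mult_le_mono1) simp
  moreover have "(card F + 1) * 2 ^ Suc d = (2 * card F + 2) * 2 ^ d" by simp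
  ultimately have "(card F + 1) * 2 ^ Suc d \<le> (card ?F + 1) * 2 ^ d" by linarith
  thus ?case using A by linarith
qed

end



locale smat_eq = smat +
  assumes eqc: "card E = 2 ^ rk E - 1"
begin

lemma flat_card: assumes F: "flat' F" shows "card F + 1 = 2 ^ rk F"
proof -
  have FE: "F \<subseteq> E" using F unfolding flat'_def by auto
  have k: "rk F \<le> rk E" using rk_mono[OF FE] .
  have "(card F + 1) * 2 ^ (rk E - rk F) \<le> card E + 1" using upper[OF F flat_E FE] by simp
  also have "\<dots> = 2 ^ rk E" using eqc by simp
  also have "\<dots> = 2 ^ rk F * 2 ^ (rk E - rk F)" using k by (simp flip: power_add)
  finally have "card F + 1 \<le> 2 ^ rk F" by (rule mult_right_le_imp_le) simp
  thus ?thesis using lower[OF F] by simp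
qed

lemma LemL: assumes F: "flat' F" and e: "e \<in> E" "e \<notin> F"
  shows "cl (insert e F) = F \<union> insert e (t e ` F)"
proof -
  have FE: "F \<subseteq> E" using F unfolding flat'_def by auto
  note st = step[OF assms]
  have fF: "finite F" using FE finE finite_subset by blast
  have "card (F \<union> insert e (t e ` F)) = card F + card (insert e (t e ` F))"
    using st fF e by (intro card_Un_disjoint) auto
  also have "\<dots> = card F + Suc (card F)"
  proof -
    have "e \<notin> t e ` F" using st by auto
    hence "card (insert e (t e ` F)) = Suc (card (t e ` F))" using fF by simp
    thus ?thesis using card_image[OF st(2)] by simp
  qed
  finally have c1: "card (F \<union> insert e (t e ` F)) = 2 * card F + 1" by simp
  have fl: "flat' (cl (insert e F))" using flat_cl[of "insert e F"] FE e by blast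
  have "card (cl (insert e F)) + 1 = 2 ^ Suc (rk F)"
    using flat_card[OF fl] rk_step[OF assms] by simp
  also have "\<dots> = 2 * (card F + 1)" using flat_card[OF F] by simp
  finally have "card (cl (insert e F)) = card (F \<union> insert e (t e ` F))" using c1 by simp
  thus ?thesis using card_step(2)[OF assms] finite_subset[OF cl_sub finE]
    by (intro card_subset_eq[symmetric]) auto
qed

lemma cl_single: assumes "x \<in> E" shows "cl {x} = {x}"
proof -
  have fl: "flat' (cl {x})" using flat_cl assms by auto
  have "card (cl {x}) = 1" using flat_card[OF fl] rk_cl[of "{x}"] indep_rk[OF indep1[OF assms]] assms
    by simp
  moreover have "{x} \<subseteq> cl {x}" using cl_ext assms by auto
  ultimately show ?thesis by (metis card_1_singletonE singleton_iff subset_singletonD insert_subset)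
qed

lemma line: assumes "x \<in> E" "y \<in> E" "x \<noteq> y" shows "cl {x, y} = {x, y, t x y}"
proof -
  have fl: "flat' {x}" using flat_cl[of "{x}"] cl_single assms by auto
  have "cl (insert y {x}) = {x} \<union> insert y (t y ` {x})" using LemL[OF fl] assms by auto
  thus ?thesis by (auto simp: insert_commute t_comm)
qed

lemma t_inv: assumes "x \<in> E" "y \<in> E" "x \<noteq> y" shows "t x (t x y) = y"
proof -
  note tp = t_prop[OF assms]
  have "cl {x, t x y} = cl {x, y}" using LL[OF assms, of x "t x y"] tp line[OF assms] by auto
  hence "cl {x, t x y} = {x, y, t x y}" using line[OF assms] by simp
  moreover note t_prop[OF assms(1) tp(4) tp(2)[symmetric]]
  ultimately show ?thesis by auto
qed

lemma assoc: assumes "I {x, y, z}" "x \<noteq> y" "y \<noteq> z" "x \<noteq> z"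
  shows "t x (t y z) = t z (t x y)"
proof -
  have E: "x \<in> E" "y \<in> E" "z \<in> E" using indep_sub[OF assms(1)] by auto
  let ?P = "cl {x, y, z}"
  have fP: "flat' ?P" using flat_cl E by auto
  have "rk ?P = 3" using rk_cl[of "{x,y,z}"] indep_rk[OF assms(1)] E assms by auto
  hence c7: "card ?P = 7" using flat_card[OF fP] by simp
  have f1: "flat' {x, y, t x y}" using flat_cl[of "{x,y}"] line[OF E(1,2) assms(2)] E by auto
  have z1: "z \<notin> {x, y, t x y}" using notcl_of_indep[of z "{x,y}"] assms line[OF E(1,2) assms(2)]
    by (simp add: insert_commute)
  have "cl (insert z {x, y, t x y}) = cl (insert z {x, y})"
    using cl_insert_cl[of "{x,y}" z] line[OF E(1,2) assms(2)] E by simp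
  hence P1: "?P = {x, y, t x y} \<union> insert z (t z ` {x, y, t x y})"
    using LemL[OF f1 E(3) z1] by (simp add: insert_commute)
  have f2: "flat' {y, z, t y z}" using flat_cl[of "{y,z}"] line[OF E(2,3) assms(3)] E by auto
  have x2: "x \<notin> {y, z, t y z}" using notcl_of_indep[of x "{y,z}"] assms line[OF E(2,3) assms(3)]
    by simp
  have "cl (insert x {y, z, t y z}) = cl (insert x {y, z})"
    using cl_insert_cl[of "{y,z}" x] line[OF E(2,3) assms(3)] E by simp
  hence P2: "?P = {y, z, t y z} \<union> insert x (t x ` {y, z, t y z})"
    using LemL[OF f2 E(1) x2] by simp
  let ?S = "set [y, z, t y z, x, t x y, t x z]"
  have cS: "card ?S \<le> 6" using card_length[of "[y, z, t y z, x, t x y, t x z]"] by simp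
  have "t x (t y z) \<notin> ?S"
  proof
    assume "t x (t y z) \<in> ?S"
    hence "?P = ?S" using P2 by auto
    thus False using c7 cS by simp
  qed
  moreover have "t x (t y z) \<in> ?P" using P2 by auto
  ultimately show ?thesis using P1 by (auto simp: t_comm)
qed

end



definition sd :: "nat set \<Rightarrow> nat set \<Rightarrow> nat set" where "sd v w = (v - w) \<union> (w - v)"
definition span2 :: "nat set set \<Rightarrow> nat set set" where "span2 V = {gf2_sum G | G. G \<subseteq> V}"

lemma gf2_sum_empty: "gf2_sum {} = {}" unfolding gf2_sum_def by simp

lemma gf2_sum_insert: assumes "finite G" "v \<notin> G"
  shows "gf2_sum (insert v G) = sd v (gf2_sum G)"
proof -
  have "{u \<in> insert v G. i \<in> u} = (if i \<in> v then insert v {u \<in> G. i \<in> u} else {u \<in> G. i \<in> u})" for i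
    by auto
  hence "card {u \<in> insert v G. i \<in> u} = (if i \<in> v then Suc (card {u \<in> G. i \<in> u}) else card {u \<in> G. i \<in> u})" for i
    using assms by auto
  thus ?thesis unfolding gf2_sum_def sd_def by auto
qed

lemma gf2_sum_sub: "gf2_sum G \<subseteq> \<Union> G"
proof
  fix i assume "i \<in> gf2_sum G"
  hence "card {v \<in> G. i \<in> v} \<noteq> 0" unfolding gf2_sum_def by (metis even_zero mem_Collect_eq)
  hence "{v \<in> G. i \<in> v} \<noteq> {}" by (metis card.empty)
  thus "i \<in> \<Union> G" by auto
qed

lemma span2_empty: "span2 {} = {{}}" unfolding span2_def using gf2_sum_empty by auto

lemma span2_insert: assumes "finite V" "v \<notin> V"
  shows "span2 (insert v V) = span2 V \<union> sd v ` span2 V"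
proof (intro set_eqI iffI)
  fix s assume "s \<in> span2 (insert v V)"
  then obtain G where G: "G \<subseteq> insert v V" "s = gf2_sum G" unfolding span2_def by auto
  have fG: "finite G" using G assms finite_subset by blast
  show "s \<in> span2 V \<union> sd v ` span2 V"
  proof (cases "v \<in> G")
    case True
    hence "G = insert v (G - {v})" by auto
    hence "s = sd v (gf2_sum (G - {v}))" using G gf2_sum_insert[of "G - {v}" v] fG by simp
    moreover have "G - {v} \<subseteq> V" using G by auto
    ultimately show ?thesis unfolding span2_def by blast
  next
    case False thus ?thesis using G unfolding span2_def by blast
  qed
next
  fix s assume "s \<in> span2 V \<union> sd v ` span2 V"
  then consider "s \<in> span2 V" | G where "G \<subseteq> V" "s = sd v (gf2_sum G)" unfolding span2_def by blast
  thus "s \<in> span2 (insert v V)"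
  proof cases
    case 1 thus ?thesis unfolding span2_def by blast
  next
    case 2
    have "finite G" using 2 assms finite_subset by blast
    hence "s = gf2_sum (insert v G)" using 2 assms gf2_sum_insert by auto
    moreover have "insert v G \<subseteq> insert v V" using 2 by auto
    ultimately show ?thesis unfolding span2_def by blast
  qed
qed

lemma sd_self: "sd v v = {}" unfolding sd_def by auto
lemma sd_empty: "sd v {} = v" unfolding sd_def by auto
lemma sd_comm: "sd v w = sd w v" unfolding sd_def by auto
lemma sd_eq_empty: "sd v w = {} \<longleftrightarrow> v = w" unfolding sd_def by auto
lemma sd_sd: "sd v (sd v w) = w" unfolding sd_def by auto

lemma gf2_indep_iff: assumes "finite V"
  shows "gf2_indep V \<longleftrightarrow> (\<forall>v\<in>V. v \<notin> span2 (V - {v}))"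
proof
  assume H: "gf2_indep V"
  show "\<forall>v\<in>V. v \<notin> span2 (V - {v})"
  proof (intro ballI notI)
    fix v assume v: "v \<in> V" "v \<in> span2 (V - {v})"
    then obtain G where G: "G \<subseteq> V - {v}" "v = gf2_sum G" unfolding span2_def by auto
    have "finite G" using G assms finite_subset by blast
    hence "gf2_sum (insert v G) = {}" using G gf2_sum_insert[of G v] sd_self by auto
    moreover have "insert v G \<subseteq> V" using G v by auto
    ultimately show False using H unfolding gf2_indep_def by blast
  qed
next
  assume H: "\<forall>v\<in>V. v \<notin> span2 (V - {v})"
  show "gf2_indep V" unfolding gf2_indep_def
  proof (intro allI impI notI)
    fix G assume G: "G \<subseteq> V" "G \<noteq> {}" "gf2_sum G = {}"
    then obtain v where v: "v \<in> G" by blast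
    have fG: "finite G" using G assms finite_subset by blast
    have "G = insert v (G - {v})" using v by auto
    hence "sd v (gf2_sum (G - {v})) = {}" using G gf2_sum_insert[of "G - {v}" v] fG by simp
    hence "gf2_sum (G - {v}) = v" using sd_eq_empty by auto
    moreover have "G - {v} \<subseteq> V - {v}" using G by auto
    ultimately have "v \<in> span2 (V - {v})" unfolding span2_def by blast
    thus False using H G v by auto
  qed
qed




context smat_eq begin

lemma H1: assumes F: "flat' F" and a: "a \<in> E" "a \<notin> F" and xy: "x \<in> F" "y \<in> F" "x \<noteq> y"
  shows "t a (t x y) = t x (t a y)"
proof -
  have FE: "F \<subseteq> E" using F unfolding flat'_def by auto
  have "cl {x, y} \<subseteq> F" using flat_sub[OF F] xy by auto
  hence "a \<notin> cl {x, y}" using a by auto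
  hence "I (insert a {x, y})" using indep_insert_notcl[OF indep2] a xy FE by auto
  hence "I {x, y, a}" by (simp add: insert_commute)
  hence "t x (t y a) = t a (t x y)" using assoc[of x y a] xy a by auto
  thus ?thesis by (simp add: t_comm)
qed

lemma H2: assumes F: "flat' F" and a: "a \<in> E" "a \<notin> F" and xy: "x \<in> F" "y \<in> F" "x \<noteq> y"
  shows "t (t a x) (t a y) = t x y"
proof -
  have FE: "F \<subseteq> E" using F unfolding flat'_def by auto
  note st = step[OF F a]
  let ?p = "t a x"
  have ax: "a \<noteq> x" "a \<noteq> y" using a xy by auto
  have pE: "?p \<in> E" and pa: "?p \<noteq> a" using t_prop[OF a(1) _ ax(1)] xy FE by auto
  have py: "?p \<noteq> y" using st xy by auto
  have pt: "?p \<noteq> t a y" using st(2) xy unfolding inj_on_def by auto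
  have "?p \<notin> cl {a, y}" using line[OF a(1) _ ax(2)] xy FE pa py pt by auto
  hence "I (insert ?p {a, y})" using indep_insert_notcl[OF indep2] a xy FE pE by auto
  hence "t ?p (t a y) = t y (t ?p a)" using assoc[of ?p a y] pa py ax by auto
  also have "t ?p a = x"
  proof -
    have "x \<in> E" using xy FE by auto
    have "t ?p a = t a ?p" by (rule t_comm)
    also have "\<dots> = x" using t_inv[OF a(1) \<open>x \<in> E\<close> ax(1)] .
    finally show ?thesis .
  qed
  finally show ?thesis by (simp add: t_comm)
qed

end

locale coord = smat_eq +
  fixes b :: "nat \<Rightarrow> 'a"
  assumes binj: "inj_on b {..<rk E}" and bind: "I (b ` {..<rk E})"
begin

primrec psi :: "nat \<Rightarrow> nat set \<Rightarrow> 'a" where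
  "psi 0 v = undefined"
| "psi (Suc k) v = (if k \<in> v then (if v = {k} then b k else t (b k) (psi k (v - {k}))) else psi k v)"

declare psi.simps(2)[simp del]

definition P :: "nat \<Rightarrow> nat set set" where "P k = {v. v \<subseteq> {..<k} \<and> v \<noteq> {}}"
definition Fk where "Fk k = cl (b ` {..<k})"

lemma Fk_facts: assumes "k \<le> rk E"
  shows "I (b ` {..<k})" "flat' (Fk k)" "rk (Fk k) = k" "card (Fk k) + 1 = 2 ^ k"
proof -
  have "b ` {..<k} \<subseteq> b ` {..<rk E}" using assms by (meson image_mono lessThan_subset_iff)
  thus I: "I (b ` {..<k})" using indep_mono[OF bind] by blast
  show fl: "flat' (Fk k)" unfolding Fk_def using flat_cl indep_sub[OF I] by auto
  have "card (b ` {..<k}) = k" using card_image[of b "{..<k}"] inj_on_subset[OF binj] assms by auto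
  thus rkF: "rk (Fk k) = k" unfolding Fk_def using rk_cl indep_sub[OF I] indep_rk[OF I] by auto
  show "card (Fk k) + 1 = 2 ^ k" using flat_card[OF fl] rkF by simp
qed

lemma b_notin: assumes "k < rk E" shows "b k \<in> E" "b k \<notin> Fk k"
proof -
  have I1: "I (b ` {..<Suc k})" using Fk_facts(1)[of "Suc k"] assms by auto
  thus "b k \<in> E" using indep_sub by auto
  note I1
  moreover have "b ` {..<Suc k} = insert (b k) (b ` {..<k})" by (auto simp: lessThan_Suc)
  moreover have "b k \<notin> b ` {..<k}" using binj assms unfolding inj_on_def by force
  ultimately show "b k \<notin> Fk k" unfolding Fk_def using notcl_of_indep indep_sub by auto
qed

lemma Fk_Suc: assumes "k < rk E" shows "Fk (Suc k) = Fk k \<union> insert (b k) (t (b k) ` Fk k)"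
proof -
  have "b ` {..<Suc k} = insert (b k) (b ` {..<k})" by (auto simp: lessThan_Suc)
  hence "Fk (Suc k) = cl (insert (b k) (Fk k))" unfolding Fk_def
    using cl_insert_cl[of "b ` {..<k}" "b k"] b_notin[OF assms] indep_sub Fk_facts(1)[of k] assms
    by auto
  thus ?thesis using LemL[OF Fk_facts(2)] b_notin[OF assms] assms by auto
qed

lemma P_Suc: "P (Suc k) = P k \<union> {{k}} \<union> insert k ` P k"
proof (intro set_eqI iffI)
  fix v assume v: "v \<in> P (Suc k)"
  show "v \<in> P k \<union> {{k}} \<union> insert k ` P k"
  proof (cases "k \<in> v")
    case True
    show ?thesis
    proof (cases "v = {k}")
      case False
      hence "v - {k} \<in> P k" using v True unfolding P_def by (auto simp: lessThan_Suc)
      moreover have "v = insert k (v - {k})" using True by auto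
      ultimately show ?thesis by blast
    qed simp
  next
    case False thus ?thesis using v unfolding P_def by (auto simp: lessThan_Suc)
  qed
next
  fix v assume "v \<in> P k \<union> {{k}} \<union> insert k ` P k"
  thus "v \<in> P (Suc k)" unfolding P_def by (auto simp: lessThan_Suc)
qed

lemma P_notin: "v \<in> P k \<Longrightarrow> k \<notin> v" unfolding P_def by auto

lemma psi_old: "v \<in> P k \<Longrightarrow> psi (Suc k) v = psi k v" using P_notin unfolding psi.simps(2) by auto
lemma psi_k: "psi (Suc k) {k} = b k" unfolding psi.simps(2) by simp
lemma psi_new: "w \<in> P k \<Longrightarrow> psi (Suc k) (insert k w) = t (b k) (psi k w)"
proof -
  assume w: "w \<in> P k"
  hence "insert k w \<noteq> {k}" "insert k w - {k} = w" using P_notin[OF w] unfolding P_def by auto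
  thus ?thesis unfolding psi.simps(2) by simp
qed

lemma card_P: "card (P k) + 1 = 2 ^ k"
proof -
  have "P k = Pow {..<k} - {{}}" unfolding P_def by auto
  hence "card (P k) = 2 ^ k - 1" by (simp add: card_Pow)
  thus ?thesis by simp
qed

lemma finite_P: "finite (P k)" unfolding P_def by (rule finite_subset[of _ "Pow {..<k}"]) auto

lemma sd_P: "v \<in> P k \<Longrightarrow> w \<in> P k \<Longrightarrow> v \<noteq> w \<Longrightarrow> sd v w \<in> P k"
  unfolding P_def sd_def by auto

lemma main: "k \<le> rk E \<Longrightarrow> psi k ` P k = Fk k \<and> inj_on (psi k) (P k) \<and>
  (\<forall>v\<in>P k. \<forall>w\<in>P k. v \<noteq> w \<longrightarrow> psi k (sd v w) = t (psi k v) (psi k w))"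
proof (induction k)
  case 0
  have "P 0 = {}" unfolding P_def by auto
  moreover have "Fk 0 = {}" unfolding Fk_def using cl_empty by simp
  ultimately show ?case by simp
next
  case (Suc k)
  hence k: "k < rk E" by simp
  have IH: "psi k ` P k = Fk k" "inj_on (psi k) (P k)"
    "\<And>v w. v\<in>P k \<Longrightarrow> w\<in>P k \<Longrightarrow> v \<noteq> w \<Longrightarrow> psi k (sd v w) = t (psi k v) (psi k w)"
    using Suc k by auto
  let ?a = "b k"
  note bn = b_notin[OF k]
  have flk: "flat' (Fk k)" using Fk_facts(2)[of k] k by simp
  have FkE: "Fk k \<subseteq> E" using flk k unfolding flat'_def by auto
  have psiF: "v \<in> P k \<Longrightarrow> psi k v \<in> Fk k" for v using IH by auto
  have img: "psi (Suc k) ` P (Suc k) = Fk (Suc k)"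
  proof -
    have "psi (Suc k) ` P (Suc k) = psi (Suc k) ` P k \<union> {psi (Suc k) {k}} \<union> psi (Suc k) ` insert k ` P k"
      unfolding P_Suc by auto
    moreover have "psi (Suc k) ` P k = psi k ` P k" by (rule image_cong[OF refl psi_old])
    moreover have "psi (Suc k) ` insert k ` P k = (\<lambda>w. psi (Suc k) (insert k w)) ` P k"
      by (rule image_image)
    moreover have "\<dots> = (\<lambda>w. t ?a (psi k w)) ` P k" by (rule image_cong[OF refl psi_new])
    moreover have "\<dots> = t ?a ` psi k ` P k" by (rule image_image[symmetric])
    ultimately show ?thesis using Fk_Suc[OF k] IH(1) psi_k by simp
  qed
  moreover have "inj_on (psi (Suc k)) (P (Suc k))"
  proof (rule eq_card_imp_inj_on[OF finite_P])
    show "card (psi (Suc k) ` P (Suc k)) = card (P (Suc k))"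
      using img card_P[of "Suc k"] Fk_facts(4)[of "Suc k"] Suc(2) by simp
  qed
  moreover
  define rank where "rank v = (if v \<in> P k then 0 else if v = {k} then 1 else (2::nat))" for v
  have cls: "v \<in> P k \<or> v = {k} \<or> (\<exists>v'\<in>P k. v = insert k v')" if "v \<in> P (Suc k)" for v
    using that unfolding P_Suc by blast
  have K: "psi (Suc k) (sd v w) = t (psi (Suc k) v) (psi (Suc k) w)"
    if vw: "v \<in> P (Suc k)" "w \<in> P (Suc k)" "v \<noteq> w" "rank v \<le> rank w" for v w
  proof -
    consider (A) "v \<in> P k" | (B) "v = {k}" "v \<notin> P k" | (C) v' where "v = insert k v'" "v' \<in> P k" "v \<notin> P k" "v \<noteq> {k}"
      using cls[OF vw(1)] by blast
    thus ?thesis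
    proof cases
      case A
      consider (A1) "w \<in> P k" | (A2) "w = {k}" | (A3) w' where "w = insert k w'" "w' \<in> P k"
        using cls[OF vw(2)] by blast
      thus ?thesis
      proof cases
        case A1
        have "psi (Suc k) (sd v w) = psi k (sd v w)" using psi_old[OF sd_P[OF A A1 vw(3)]] .
        also have "\<dots> = t (psi k v) (psi k w)" using IH(3)[OF A A1 vw(3)] .
        finally show ?thesis using psi_old[OF A] psi_old[OF A1] by simp
      next
        case A2
        have "sd v w = insert k v" using P_notin[OF A] A2 unfolding sd_def by auto
        hence "psi (Suc k) (sd v w) = t ?a (psi k v)" using psi_new[OF A] by simp
        thus ?thesis using psi_old[OF A] psi_k A2 t_comm by metis
      next
        case A3
        have nk: "k \<notin> v" "k \<notin> w'" using P_notin A3(2) A by auto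
        have av: "?a \<noteq> psi k v" using psiF[OF A] bn by auto
        have pvE: "psi k v \<in> E" using psiF[OF A] FkE by auto
        show ?thesis
        proof (cases "v = w'")
          case True
          hence "sd v w = {k}" using A3 nk unfolding sd_def by auto
          hence "psi (Suc k) (sd v w) = ?a" using psi_k by simp
          moreover have "t (psi k v) (t ?a (psi k v)) = ?a"
            using t_inv[OF pvE bn(1) av[symmetric]] t_comm by metis
          ultimately show ?thesis using psi_old[OF A] psi_new[OF A3(2)] A3(1) True by simp
        next
          case False
          hence "sd v w = insert k (sd v w')" using A3 nk unfolding sd_def by auto
          hence "psi (Suc k) (sd v w) = t ?a (psi k (sd v w'))"
            using psi_new[OF sd_P[OF A A3(2) False]] by simp
          also have "\<dots> = t ?a (t (psi k v) (psi k w'))" using IH(3)[OF A A3(2) False] by simp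
          also have "\<dots> = t (psi k v) (t ?a (psi k w'))"
          proof (rule H1[OF flk bn psiF[OF A] psiF[OF A3(2)]])
            show "psi k v \<noteq> psi k w'" using IH(2) False A A3(2) unfolding inj_on_def by blast
          qed
          finally show ?thesis using psi_old[OF A] psi_new[OF A3(2)] A3(1) by simp
        qed
      qed
    next
      case B
      have "w \<notin> P k" using vw B unfolding rank_def by (cases "w \<in> P k") auto
      then obtain w' where w': "w = insert k w'" "w' \<in> P k" using cls[OF vw(2)] vw(3) B by blast
      have "sd v w = w'" using B w' P_notin[OF w'(2)] unfolding sd_def by auto
      hence "psi (Suc k) (sd v w) = psi k w'" using psi_old[OF w'(2)] by simp
      moreover have "t ?a (t ?a (psi k w')) = psi k w'"
      proof -
        have "psi k w' \<in> E" "?a \<noteq> psi k w'" using psiF[OF w'(2)] FkE bn by auto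
        thus ?thesis using t_inv[of ?a "psi k w'"] bn by blast
      qed
      ultimately show ?thesis using psi_k psi_new[OF w'(2)] B w' by simp
    next
      case C
      have "w \<notin> P k" "w \<noteq> {k}" using vw C unfolding rank_def by (cases "w \<in> P k"; cases "w = {k}"; simp)+
      then obtain w' where w': "w = insert k w'" "w' \<in> P k" using cls[OF vw(2)] by blast
      have vw': "v' \<noteq> w'" using vw C w' by auto
      have "sd v w = sd v' w'" using C w' P_notin[OF w'(2)] P_notin[OF C(2)] unfolding sd_def by auto
      hence "psi (Suc k) (sd v w) = psi k (sd v' w')" using psi_old[OF sd_P[OF C(2) w'(2) vw']] by simp
      also have "\<dots> = t (psi k v') (psi k w')" using IH(3)[OF C(2) w'(2) vw'] .
      also have "\<dots> = t (t ?a (psi k v')) (t ?a (psi k w'))"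
      proof (rule H2[OF flk bn psiF[OF C(2)] psiF[OF w'(2)], symmetric])
        show "psi k v' \<noteq> psi k w'" using IH(2) vw' C(2) w'(2) unfolding inj_on_def by blast
      qed
      finally show ?thesis using psi_new[OF C(2)] psi_new[OF w'(2)] C(1) w'(1) by simp
    qed
  qed
  have "\<forall>v\<in>P (Suc k). \<forall>w\<in>P (Suc k). v \<noteq> w \<longrightarrow>
      psi (Suc k) (sd v w) = t (psi (Suc k) v) (psi (Suc k) w)"
  proof (intro ballI impI)
    fix v w assume vw: "v \<in> P (Suc k)" "w \<in> P (Suc k)" "v \<noteq> w"
    show "psi (Suc k) (sd v w) = t (psi (Suc k) v) (psi (Suc k) w)"
    proof (cases "rank v \<le> rank w")
      case True thus ?thesis using K[OF vw] by blast
    next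
      case False
      hence "psi (Suc k) (sd w v) = t (psi (Suc k) w) (psi (Suc k) v)" using K[OF vw(2,1) vw(3)[symmetric]] by simp
      thus ?thesis using sd_comm t_comm by metis
    qed
  qed
  ultimately show ?case by blast
qed

end



context coord begin

lemma FkR: "Fk (rk E) = E"
proof -
  have fl: "flat' (Fk (rk E))" and c: "card (Fk (rk E)) + 1 = 2 ^ rk E" using Fk_facts by auto
  have "Fk (rk E) \<subseteq> E" using fl unfolding flat'_def by auto
  moreover have "card (Fk (rk E)) = card E" using c eqc by simp
  ultimately show ?thesis using finE by (intro card_subset_eq) auto
qed

lemma psiR: "psi (rk E) ` P (rk E) = E" "inj_on (psi (rk E)) (P (rk E))"
  "\<And>v w. v \<in> P (rk E) \<Longrightarrow> w \<in> P (rk E) \<Longrightarrow> v \<noteq> w \<Longrightarrow>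
     psi (rk E) (sd v w) = t (psi (rk E) v) (psi (rk E) w)"
  using main[of "rk E"] FkR by auto

lemma span_P: "V \<subseteq> P (rk E) \<Longrightarrow> span2 V - {{}} \<subseteq> P (rk E)"
proof
  fix s assume V: "V \<subseteq> P (rk E)" and s: "s \<in> span2 V - {{}}"
  then obtain G where G: "G \<subseteq> V" "s = gf2_sum G" unfolding span2_def by auto
  have "s \<subseteq> \<Union> G" using G gf2_sum_sub by auto
  also have "\<dots> \<subseteq> {..<rk E}" using G V unfolding P_def by auto
  finally show "s \<in> P (rk E)" using s unfolding P_def by auto
qed

lemma empty_span: "{} \<in> span2 V" unfolding span2_def using gf2_sum_empty by auto

lemma clC: "finite V \<Longrightarrow> V \<subseteq> P (rk E) \<Longrightarrow>
  cl (psi (rk E) ` V) = psi (rk E) ` (span2 V - {{}})"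
proof (induction V rule: finite_subset_induct')
  case empty thus ?case using cl_empty span2_empty by simp
next
  case (insert v V)
  let ?\<psi> = "psi (rk E)"
  let ?S = "span2 V"
  let ?C = "cl (?\<psi> ` V)"
  let ?x = "?\<psi> v"
  note inj = psiR(2)
  have xE: "?x \<in> E" using psiR(1) insert by auto
  have VE: "?\<psi> ` V \<subseteq> E" using psiR(1) insert by auto
  have SP: "?S - {{}} \<subseteq> P (rk E)" using span_P insert by auto
  have fC: "flat' ?C" using flat_cl VE by auto
  have eq1: "cl (?\<psi> ` insert v V) = cl (insert ?x ?C)" using cl_insert_cl[OF VE xE] by simp
  have sp: "span2 (insert v V) = ?S \<union> sd v ` ?S" using span2_insert insert by auto
  have vP: "v \<in> P (rk E)" "v \<noteq> {}" using insert unfolding P_def by auto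
  show ?case
  proof (cases "?x \<in> ?C")
    case True
    hence "cl (insert ?x ?C) = ?C" using fC unfolding flat'_def by (simp add: insert_absorb)
    have vS: "v \<in> ?S - {{}}"
    proof -
      have "?x \<in> ?\<psi> ` (?S - {{}})" using True insert.IH by simp
      then obtain u where u: "u \<in> ?S - {{}}" "?\<psi> u = ?x" by (metis imageE)
      hence "u = v" using inj SP vP unfolding inj_on_def by blast
      thus ?thesis using u by simp
    qed
    have "sd v w \<in> ?S - {{}}" if w: "w \<in> ?S" "sd v w \<noteq> {}" for w
    proof (cases "w = {}")
      case True thus ?thesis using vS by (simp add: sd_empty)
    next
      case False
      hence wP: "w \<in> P (rk E)" and wS: "w \<in> ?S - {{}}" using w SP by auto
      have vw: "v \<noteq> w" using w sd_self by auto
      have pvw: "?\<psi> v \<noteq> ?\<psi> w" using inj vP wP vw unfolding inj_on_def by blast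
      have pwE: "?\<psi> w \<in> E" using psiR(1) wP by auto
      have "?\<psi> (sd v w) = t ?x (?\<psi> w)" using psiR(3)[OF vP(1) wP vw] .
      also have "\<dots> \<in> cl {?x, ?\<psi> w}" using t_prop[OF xE pwE pvw] by simp
      also have "cl {?x, ?\<psi> w} \<subseteq> ?C" using flat_sub[OF fC] True wS insert.IH by auto
      finally have "?\<psi> (sd v w) \<in> ?\<psi> ` (?S - {{}})" using insert.IH by simp
      then obtain u where u: "u \<in> ?S - {{}}" "?\<psi> u = ?\<psi> (sd v w)" by (metis imageE)
      have "sd v w \<in> P (rk E)" using sd_P[OF vP(1) wP vw] .
      hence "u = sd v w" using u inj SP unfolding inj_on_def by blast
      thus ?thesis using u by simp
    qed
    hence "(?S \<union> sd v ` ?S) - {{}} = ?S - {{}}" by auto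
    thus ?thesis using eq1 sp \<open>cl (insert ?x ?C) = ?C\<close> insert.IH by simp
  next
    case False
    have L: "cl (insert ?x ?C) = ?C \<union> insert ?x (t ?x ` ?C)" using LemL[OF fC xE False] .
    have vnS: "v \<notin> ?S" using False vP insert.IH by auto
    have seq: "(?S \<union> sd v ` ?S) - {{}} = (?S - {{}}) \<union> insert v (sd v ` (?S - {{}}))"
    proof (intro set_eqI iffI)
      fix s assume "s \<in> (?S \<union> sd v ` ?S) - {{}}"
      thus "s \<in> (?S - {{}}) \<union> insert v (sd v ` (?S - {{}}))" by (auto simp: sd_empty)
    next
      fix s assume s: "s \<in> (?S - {{}}) \<union> insert v (sd v ` (?S - {{}}))"
      have "sd v w \<noteq> {}" if "w \<in> ?S" for w using that vnS sd_eq_empty by auto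
      thus "s \<in> (?S \<union> sd v ` ?S) - {{}}" using s vP empty_span[of V]
        by (auto simp: sd_empty intro: image_eqI[of v "sd v" "{}"])
    qed
    have "?\<psi> ` sd v ` (?S - {{}}) = (\<lambda>w. ?\<psi> (sd v w)) ` (?S - {{}})" by (rule image_image)
    also have "\<dots> = (\<lambda>w. t ?x (?\<psi> w)) ` (?S - {{}})"
    proof (rule image_cong[OF refl])
      fix w assume "w \<in> ?S - {{}}"
      hence "w \<in> P (rk E)" "v \<noteq> w" using SP vnS by auto
      thus "?\<psi> (sd v w) = t ?x (?\<psi> w)" using psiR(3)[OF vP(1)] by blast
    qed
    also have "\<dots> = t ?x ` ?C" using insert.IH by (simp add: image_image)
    finally have "?\<psi> ` sd v ` (?S - {{}}) = t ?x ` ?C" .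
    hence "?\<psi> ` ((?S \<union> sd v ` ?S) - {{}}) = ?C \<union> insert ?x (t ?x ` ?C)"
      unfolding seq using insert.IH by (simp add: image_Un)
    thus ?thesis using eq1 sp L by simp
  qed
qed

lemma indep_corr: assumes V: "V \<subseteq> P (rk E)" shows "I (psi (rk E) ` V) \<longleftrightarrow> gf2_indep V"
proof -
  let ?\<psi> = "psi (rk E)"
  have fV: "finite V" using V finite_P finite_subset by blast
  have VE: "?\<psi> ` V \<subseteq> E" using psiR(1) V by auto
  have "I (?\<psi> ` V) \<longleftrightarrow> (\<forall>y\<in>?\<psi> ` V. y \<notin> cl (?\<psi> ` V - {y}))" using indep_iff_cl[OF VE] .
  also have "\<dots> \<longleftrightarrow> (\<forall>v\<in>V. v \<notin> span2 (V - {v}))"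
  proof -
    have "?\<psi> v \<notin> cl (?\<psi> ` V - {?\<psi> v}) \<longleftrightarrow> v \<notin> span2 (V - {v})" if v: "v \<in> V" for v
    proof -
      have "?\<psi> ` V - {?\<psi> v} = ?\<psi> ` (V - {v})"
        using psiR(2) V v unfolding inj_on_def by blast
      hence "cl (?\<psi> ` V - {?\<psi> v}) = ?\<psi> ` (span2 (V - {v}) - {{}})"
      proof -
        have "V - {v} \<subseteq> P (rk E)" "finite (V - {v})" using V fV by auto
        thus ?thesis using clC[of "V - {v}"] \<open>?\<psi> ` V - {?\<psi> v} = ?\<psi> ` (V - {v})\<close> by simp
      qed
      moreover have "span2 (V - {v}) - {{}} \<subseteq> P (rk E)" using span_P[of "V - {v}"] V by blast
      moreover have "v \<in> P (rk E)" "v \<noteq> {}" using v V unfolding P_def by auto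
      ultimately show ?thesis using psiR(2) unfolding inj_on_def by blast
    qed
    thus ?thesis by auto
  qed
  also have "\<dots> \<longleftrightarrow> gf2_indep V" using gf2_indep_iff[OF fV] by simp
  finally show ?thesis .
qed

end

theorem lemma3p1:
  fixes E :: "'a set" and I :: "'a set \<Rightarrow> bool" and r :: nat
  assumes "matroid E I"
    and "simple_matroid E I"
    and "matroid_rank E I = r"
    and "\<not> (\<exists>X. claw E I X \<and> card X = 2)"
  shows "2 ^ r - 1 \<le> card E
    \<and> (card E = 2 ^ r - 1 \<longrightarrow> matroid_iso E I (PG_ground r) (PG_indep r))"
proof -
  interpret smat E I using assms by (unfold_locales) auto
  have rE: "rk E = r" using assms(3) unfolding matroid_rank_def by simp
  have part1: "2 ^ r - 1 \<le> card E" using lower[OF flat_E] rE by simp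
  moreover have "matroid_iso E I (PG_ground r) (PG_indep r)" if ce: "card E = 2 ^ r - 1"
  proof -
    interpret smat_eq E I using ce rE by unfold_locales simp
    obtain B where B: "basis E B" using basis_ex' by blast
    have cB: "card B = r" using basis_card[OF B] rE by simp
    have fB: "finite B" using B indep_fin unfolding basis_def by auto
    obtain b where bb: "bij_betw b {0..<card B} B" using ex_bij_betw_nat_finite[OF fB] by blast
    hence bb': "inj_on b {..<rk E}" "b ` {..<rk E} = B" using cB rE unfolding bij_betw_def
      by (auto simp: atLeast0LessThan)
    interpret coord E I b using bb' B unfolding basis_def by unfold_locales auto
    let ?\<psi> = "psi r"
    have PG: "PG_ground r = P r" unfolding PG_ground_def P_def by auto
    have bij: "bij_betw ?\<psi> (P r) E" using psiR rE unfolding bij_betw_def by auto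
    define f where "f = inv_into (P r) ?\<psi>"
    have bf: "bij_betw f E (PG_ground r)" using bij_betw_inv_into[OF bij] PG unfolding f_def by simp
    have "I X \<longleftrightarrow> PG_indep r (f ` X)" if X: "X \<subseteq> E" for X
    proof -
      have fX: "f ` X \<subseteq> P r" using bf X PG unfolding bij_betw_def by auto
      have "?\<psi> ` (f ` X) = X" unfolding f_def using image_inv_into_cancel[of ?\<psi> "P r" E X] psiR(1) rE X
        by simp
      hence "I X \<longleftrightarrow> gf2_indep (f ` X)" using indep_corr[of "f ` X"] fX rE by simp
      thus ?thesis unfolding PG_indep_def using fX PG by auto
    qed
    thus ?thesis unfolding matroid_iso_def using bf by blast
  qed
  ultimately show ?thesis by blast
qed


end
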